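(* Let $\mathcal{G}=(V,L)$ be a finite connected undirected graph with monitor set $M$ and non-monitor set $N=V\setminus M$, $\sigma=|N|$, and let $P$ be a given set of measurement paths between monitors (Uncontrollable Probing). For $1\le k\le\sigma-1$ let $S^{\mathrm{outer}}(k):=\{v\in N:\mathrm{MSC}(v)\ge k\}$ and $S^{\mathrm{inner}}(k):=\{v\in N:\mathrm{MSC}(v)\ge k+1\}$, and let $S^*_{\mathrm{UP}}(k)$ be the maximum-cardinality $k$-identifiable subset of $N$. Then $S^{\mathrm{inner}}(k)\subseteq S^*_{\mathrm{UP}}(k)\subseteq S^{\mathrm{outer}}(k)$.
   Context: A failure set is any $F\subseteq N$; a path fails iff it traverses a node of $F$. $P_F$ is the set of paths in $P$ traversing a node of $F$; $F_1,F_2$ distinguishable iff $P_{F_1}\ne P_{F_2}$. $S\subseteq N$ is $k$-identifiable if any two failure sets $F_1,F_2$ with $|F_1|,|F_2|\le k$ and $F_1\cap S\ne F_2\cap S$ are distinguishable; the maximum-cardinality $k$-identifiable subset of $N$ is unique. For $v\in N$, $P_v$ is the set of paths in $P$ traversing $v$. $\mathrm{MSC}(v)$ is the minimum cardinality of a set $V'\subseteq N\setminus\{v\}$ with $P_v\subseteq\bigcup_{w\in V'}P_w$; if no such $V'$ exists (e.g. when $v$ lies on a two-hop measurement path monitor–$v$–monitor), $\mathrm{MSC}(v):=\sigma$. *)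

theory Defs
  imports Main
begin

definition connected_graph :: "'v set \<Rightarrow> ('v \<Rightarrow> 'v \<Rightarrow> bool) \<Rightarrow> bool" where
  "connected_graph V E \<longleftrightarrow> finite V \<and> V \<noteq> {}
     \<and> (\<forall>u w. E u w \<longrightarrow> u \<in> V \<and> w \<in> V)
     \<and> (\<forall>u w. E u w \<longrightarrow> E w u) \<and> (\<forall>u. \<not> E u u)
     \<and> (\<forall>u\<in>V. \<forall>w\<in>V. (u, w) \<in> {(a, b). E a b}\<^sup>*)"

definition is_path :: "'v set \<Rightarrow> ('v \<Rightarrow> 'v \<Rightarrow> bool) \<Rightarrow> 'v list \<Rightarrow> bool" where
  "is_path V E p \<longleftrightarrow> p \<noteq> [] \<and> set p \<subseteq> V \<and> distinct p
     \<and> (\<forall>i. Suc i < length p \<longrightarrow> E (p ! i) (p ! Suc i))"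

definition measurement_path :: "'v set \<Rightarrow> ('v \<Rightarrow> 'v \<Rightarrow> bool) \<Rightarrow> 'v set \<Rightarrow> 'v list \<Rightarrow> bool" where
  "measurement_path V E M p \<longleftrightarrow> is_path V E p \<and> length p \<ge> 2 \<and> hd p \<in> M \<and> last p \<in> M"

definition paths_through :: "'v list set \<Rightarrow> 'v set \<Rightarrow> 'v list set" where
  "paths_through P F = {p \<in> P. set p \<inter> F \<noteq> {}}"

definition distinguishable :: "'v list set \<Rightarrow> 'v set \<Rightarrow> 'v set \<Rightarrow> bool" where
  "distinguishable P F1 F2 \<longleftrightarrow> paths_through P F1 \<noteq> paths_through P F2"

definition k_identifiable :: "'v list set \<Rightarrow> 'v set \<Rightarrow> nat \<Rightarrow> 'v set \<Rightarrow> bool" where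
  "k_identifiable P N k S \<longleftrightarrow>
     (\<forall>F1 F2. F1 \<subseteq> N \<and> F2 \<subseteq> N \<and> card F1 \<le> k \<and> card F2 \<le> k \<and> F1 \<inter> S \<noteq> F2 \<inter> S
        \<longrightarrow> distinguishable P F1 F2)"

definition max_k_identifiable :: "'v list set \<Rightarrow> 'v set \<Rightarrow> nat \<Rightarrow> 'v set \<Rightarrow> bool" where
  "max_k_identifiable P N k S \<longleftrightarrow> S \<subseteq> N \<and> k_identifiable P N k S
     \<and> (\<forall>S'. S' \<subseteq> N \<and> k_identifiable P N k S' \<longrightarrow> card S' \<le> card S)"

text \<open>MSC(v); equals sigma = |N| if no covering set exists.\<close>
definition MSC :: "'v list set \<Rightarrow> 'v set \<Rightarrow> 'v \<Rightarrow> nat" where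
  "MSC P N v =
     (if \<exists>V'. V' \<subseteq> N - {v} \<and> paths_through P {v} \<subseteq> (\<Union>w\<in>V'. paths_through P {w})
      then (LEAST n. \<exists>V'. V' \<subseteq> N - {v} \<and> paths_through P {v} \<subseteq> (\<Union>w\<in>V'. paths_through P {w})
                         \<and> card V' = n)
      else card N)"

definition S_outer :: "'v list set \<Rightarrow> 'v set \<Rightarrow> nat \<Rightarrow> 'v set" where
  "S_outer P N k = {v \<in> N. MSC P N v \<ge> k}"

definition S_inner :: "'v list set \<Rightarrow> 'v set \<Rightarrow> nat \<Rightarrow> 'v set" where
  "S_inner P N k = {v \<in> N. MSC P N v \<ge> k + 1}"

end

theory Submission imports Defs begin
lemma pt_union: "paths_through P F = (\<Union>w\<in>F. paths_through P {w})"
  unfolding paths_through_def by auto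

lemma pt_Un: "paths_through P (A \<union> B) = paths_through P A \<union> paths_through P B"
  unfolding paths_through_def by auto

lemma kid_union:
  assumes "k_identifiable P N k S" "k_identifiable P N k T"
  shows "k_identifiable P N k (S \<union> T)"
  unfolding k_identifiable_def
proof (intro allI impI)
  fix F1 F2 assume H: "F1 \<subseteq> N \<and> F2 \<subseteq> N \<and> card F1 \<le> k \<and> card F2 \<le> k \<and> F1 \<inter> (S \<union> T) \<noteq> F2 \<inter> (S \<union> T)"
  hence "F1 \<inter> S \<noteq> F2 \<inter> S \<or> F1 \<inter> T \<noteq> F2 \<inter> T" by blast
  moreover have "F1 \<inter> S \<noteq> F2 \<inter> S \<Longrightarrow> distinguishable P F1 F2"
    using H assms(1) unfolding k_identifiable_def by simp
  moreover have "F1 \<inter> T \<noteq> F2 \<inter> T \<Longrightarrow> distinguishable P F1 F2"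
    using H assms(2) unfolding k_identifiable_def by simp
  ultimately show "distinguishable P F1 F2" by blast
qed

lemma kid_sub:
  assumes "k_identifiable P N k S" "T \<subseteq> S"
  shows "k_identifiable P N k T"
  unfolding k_identifiable_def
proof (intro allI impI)
  fix F1 F2 assume H: "F1 \<subseteq> N \<and> F2 \<subseteq> N \<and> card F1 \<le> k \<and> card F2 \<le> k \<and> F1 \<inter> T \<noteq> F2 \<inter> T"
  hence "F1 \<inter> S \<noteq> F2 \<inter> S" using assms(2) by blast
  thus "distinguishable P F1 F2" using H assms(1) unfolding k_identifiable_def by simp
qed
theorem corollary7:
  fixes V M :: "'v set" and E :: "'v \<Rightarrow> 'v \<Rightarrow> bool" and P :: "'v list set"
    and k :: nat and S :: "'v set"
  assumes "connected_graph V E"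
    and "M \<subseteq> V"
    and "\<forall>p\<in>P. measurement_path V E M p"
    and "1 \<le> k" and "k \<le> card (V - M) - 1"
    and "max_k_identifiable P (V - M) k S"
  shows "S_inner P (V - M) k \<subseteq> S \<and> S \<subseteq> S_outer P (V - M) k"
proof -
  define N where "N = V - M"
  have finN: "finite N" using assms(1) unfolding connected_graph_def N_def by auto
  have SN: "S \<subseteq> N" and Sk: "k_identifiable P N k S"
    and Smax: "\<And>S'. S' \<subseteq> N \<Longrightarrow> k_identifiable P N k S' \<Longrightarrow> card S' \<le> card S"
    using assms(6) unfolding max_k_identifiable_def N_def by auto
  have contains: "T \<subseteq> S" if "T \<subseteq> N" "k_identifiable P N k T" for T
  proof -
    have "S \<union> T \<subseteq> N" using SN that by auto
    moreover have "k_identifiable P N k (S \<union> T)" using kid_union Sk that(2) by blast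
    ultimately have "card (S \<union> T) \<le> card S" using Smax by blast
    moreover have "finite (S \<union> T)" using \<open>S \<union> T \<subseteq> N\<close> finN finite_subset by blast
    ultimately have "S \<union> T = S"
      by (metis Un_upper1 card_seteq)
    thus ?thesis by blast
  qed
  have cardN: "k + 1 \<le> card N" using assms(4,5) unfolding N_def by linarith
  have inner: "S_inner P N k \<subseteq> S"
  proof
    fix v assume v: "v \<in> S_inner P N k"
    hence vN: "v \<in> N" and m: "MSC P N v \<ge> k + 1" unfolding S_inner_def by auto
    have "k_identifiable P N k {v}"
      unfolding k_identifiable_def
    proof (intro allI impI, rule ccontr)
      fix F1 F2 assume H: "F1 \<subseteq> N \<and> F2 \<subseteq> N \<and> card F1 \<le> k \<and> card F2 \<le> k \<and> F1 \<inter> {v} \<noteq> F2 \<inter> {v}"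
        and nd: "\<not> distinguishable P F1 F2"
      have eq: "paths_through P F1 = paths_through P F2" using nd unfolding distinguishable_def by simp
      show False
      proof (cases "v \<in> F1")
        case True
        then have vF2: "v \<notin> F2" using H by auto
        have "paths_through P {v} \<subseteq> paths_through P F1" using True unfolding paths_through_def by auto
        hence cov: "paths_through P {v} \<subseteq> (\<Union>w\<in>F2. paths_through P {w})" using eq pt_union[of P F2] pt_union[of P F1] by simp
        have sub: "F2 \<subseteq> N - {v}" using H vF2 by auto
        hence ex: "\<exists>V'. V' \<subseteq> N - {v} \<and> paths_through P {v} \<subseteq> (\<Union>w\<in>V'. paths_through P {w})"
          using cov by blast
        have "MSC P N v = (LEAST n. \<exists>V'. V' \<subseteq> N - {v} \<and> paths_through P {v} \<subseteq> (\<Union>w\<in>V'. paths_through P {w}) \<and> card V' = n)"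
          using ex unfolding MSC_def by simp
        also have "\<dots> \<le> card F2" by (rule Least_le) (use sub cov in blast)
        finally show False using H m by linarith
      next
        case False
        then have vF2: "v \<in> F2" "v \<notin> F1" using H by auto
        have "paths_through P {v} \<subseteq> paths_through P F2" using vF2 unfolding paths_through_def by auto
        hence cov: "paths_through P {v} \<subseteq> (\<Union>w\<in>F1. paths_through P {w})" using eq pt_union[of P F2] pt_union[of P F1] by simp
        have sub: "F1 \<subseteq> N - {v}" using H vF2 by auto
        hence ex: "\<exists>V'. V' \<subseteq> N - {v} \<and> paths_through P {v} \<subseteq> (\<Union>w\<in>V'. paths_through P {w})"
          using cov by blast
        have "MSC P N v = (LEAST n. \<exists>V'. V' \<subseteq> N - {v} \<and> paths_through P {v} \<subseteq> (\<Union>w\<in>V'. paths_through P {w}) \<and> card V' = n)"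
          using ex unfolding MSC_def by simp
        also have "\<dots> \<le> card F1" by (rule Least_le) (use sub cov in blast)
        finally show False using H m by linarith
      qed
    qed
    thus "v \<in> S" using contains vN by blast
  qed
  have outer: "S \<subseteq> S_outer P N k"
  proof
    fix v assume vS: "v \<in> S"
    hence vN: "v \<in> N" using SN by auto
    have kv: "k_identifiable P N k {v}" using kid_sub[OF Sk] vS by auto
    show "v \<in> S_outer P N k"
    proof (rule ccontr)
      assume "v \<notin> S_outer P N k"
      hence lt: "MSC P N v < k" using vN unfolding S_outer_def by auto
      let ?Q = "\<lambda>n. \<exists>V'. V' \<subseteq> N - {v} \<and> paths_through P {v} \<subseteq> (\<Union>w\<in>V'. paths_through P {w}) \<and> card V' = n"
      have ex: "\<exists>V'. V' \<subseteq> N - {v} \<and> paths_through P {v} \<subseteq> (\<Union>w\<in>V'. paths_through P {w})"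
      proof (rule ccontr)
        assume "\<not> ?thesis"
        hence "MSC P N v = card N" unfolding MSC_def by (rule if_not_P)
        thus False using lt cardN by linarith
      qed
      hence ms: "MSC P N v = (LEAST n. ?Q n)" unfolding MSC_def by simp
      have "?Q (LEAST n. ?Q n)" by (rule LeastI_ex) (use ex in blast)
      then obtain V' where V': "V' \<subseteq> N - {v}" "paths_through P {v} \<subseteq> (\<Union>w\<in>V'. paths_through P {w})"
        "card V' = MSC P N v" using ms by auto
      have finV: "finite V'" using V'(1) finN finite_subset by blast
      have vn: "v \<notin> V'" using V'(1) by blast
      have c1: "card (insert v V') \<le> k" using vn finV V'(3) lt by simp
      have c2: "card V' \<le> k" using V' lt by auto
      have "paths_through P (insert v V') = paths_through P V'"
        using V'(2) pt_union[of P V'] pt_Un[of P "{v}" V'] by auto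
      moreover have "insert v V' \<inter> {v} \<noteq> V' \<inter> {v}" using V'(1) by auto
      moreover have "insert v V' \<subseteq> N" "V' \<subseteq> N" using V'(1) vN by auto
      ultimately have "distinguishable P (insert v V') V'"
        using kv c1 c2 unfolding k_identifiable_def by simp
      thus False using \<open>paths_through P (insert v V') = paths_through P V'\<close>
        unfolding distinguishable_def by simp
    qed
  qed
  show ?thesis using inner outer unfolding N_def by blast
qed

end
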